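(* Let $k\geq 2$ be an integer, let $\Omega_1,\Omega_2\subset\mathbb{C}$ be domains, and let $T$ map $\Omega_2$ conformally onto $\Omega_1$. Let $h=(T')^{(1-k)/2}$. Suppose that $\{f_1,\dotsc,f_k\}$ is a solution base of the differential equation \[ f^{(k)} + a_{k-2} f^{(k-2)} +a_{k-3} f^{(k-3)} + \dotsb + a_1 f' +a_0 f = 0, \] where the coefficients $a_0, \dotsc, a_{k-2}$ are analytic in $\Omega_1$. Then $\{(f_1 \circ T) h,\dotsc,(f_k \circ T) h \}$ is a solution base of a differential equation \[ g^{(k)} + b_{k-2} g^{(k-2)} +b_{k-3} g^{(k-3)} + \dotsb + b_1 g' +b_0 g = 0, \] whose coefficients $b_0,\dotsc, b_{k-2}$ are analytic in $\Omega_2$. Moreover, for any $\ell\in \{ 1, \dotsc, k-2\}$, \[ \begin{split} (a_\ell \circ T)(T')^{k-\ell} & = \sum_{j=\ell}^{k-1} b_j \left[ \sum_{i=\ell}^j \binom{j}{i} \, \frac{B_{i,\ell}\big( T', \dotsc, T^{(i-\ell+1)} \big)}{(T')^\ell} \, \frac{h^{(j-i)}}{h} \right]\\ & \qquad + \sum_{i=\ell}^{k-1} \binom{k}{i} \frac{B_{i,\ell}\big( T', \dotsc, T^{(i-\ell+1)} \big)}{(T')^\ell} \, \frac{h^{(k-i)}}{h} + \frac{B_{k,\ell}\big( T', \dotsc, T^{(k-\ell+1)} \big)}{(T')^\ell}, \end{split} \] (with the convention $b_{k-1}\equiv 0$), and \[ (a_0 \circ T) \, (T')^k = \frac{h^{(k)}}{h}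 + b_{k-2} \, \frac{h^{(k-2)}}{h} + \dotsb + b_1 \frac{h'}{h} + b_0 . \]
   Context: For integers $i\geq n\geq 1$, the incomplete exponential Bell polynomial is \[ B_{i,n}\big( z_1,\dotsc,z_{i-n+1} \big) = \sum \frac{i!}{j_1! \, j_2! \dotsb j_{i-n+1}!} \left( \frac{z_1}{1!} \right)^{j_1} \left( \frac{z_2}{2!} \right)^{j_2} \dotsb \left( \frac{z_{i-n+1}}{(i-n+1)!}\right)^{j_{i-n+1}}, \] where the sum is over all sequences $j_1,\dots,j_{i-n+1}$ of non-negative integers with $i = j_1 + 2 j_2 + \dotsb + (i-n+1) j_{i-n+1}$ and $n = j_1 + j_2 + \dotsb + j_{i-n+1}$. Here $h=(T')^{(1-k)/2}$ denotes an analytic branch of this power of the non-vanishing function $T'$. *)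

theory Defs
  imports "HOL-Complex_Analysis.Complex_Analysis"
begin

text \<open>The arguments are given as a function z indexed from 1; only z 1 .. z (i-n+1) are used.
  The summation ranges over sequences j_1,...,j_{i-n+1} (represented as functions
  nat => nat vanishing outside {1..i-n+1}).\<close>
definition bell_seqs :: "nat \<Rightarrow> nat \<Rightarrow> (nat \<Rightarrow> nat) set" where
  "bell_seqs i n = {js. (\<forall>m. m \<notin> {1..i-n+1} \<longrightarrow> js m = 0)
      \<and> (\<Sum>m=1..i-n+1. m * js m) = i \<and> (\<Sum>m=1..i-n+1. js m) = n}"

definition inc_bell :: "nat \<Rightarrow> nat \<Rightarrow> (nat \<Rightarrow> complex) \<Rightarrow> complex" where
  "inc_bell i n z = (\<Sum>js\<in>bell_seqs i n.
      of_nat (fact i) / of_nat (\<Prod>m=1..i-n+1. fact (js m))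
      * (\<Prod>m=1..i-n+1. (z m / of_nat (fact m)) ^ js m))"

definition solves_ode :: "complex set \<Rightarrow> nat \<Rightarrow> (nat \<Rightarrow> complex \<Rightarrow> complex)
    \<Rightarrow> (complex \<Rightarrow> complex) \<Rightarrow> bool" where
  "solves_ode \<Omega> k a f \<longleftrightarrow> f holomorphic_on \<Omega> \<and>
     (\<forall>z\<in>\<Omega>. (deriv ^^ k) f z + (\<Sum>j<k-1. a j z * (deriv ^^ j) f z) = 0)"

definition solution_base :: "complex set \<Rightarrow> nat \<Rightarrow> (nat \<Rightarrow> complex \<Rightarrow> complex)
    \<Rightarrow> (nat \<Rightarrow> complex \<Rightarrow> complex) \<Rightarrow> bool" where
  "solution_base \<Omega> k a fs \<longleftrightarrow>
     (\<forall>m\<in>{1..k}. solves_ode \<Omega> k a (fs m)) \<and>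
     (\<forall>c::nat \<Rightarrow> complex. (\<forall>z\<in>\<Omega>. (\<Sum>m=1..k. c m * fs m z) = 0) \<longrightarrow> (\<forall>m\<in>{1..k}. c m = 0)) \<and>
     (\<forall>g. solves_ode \<Omega> k a g \<longrightarrow>
        (\<exists>c::nat \<Rightarrow> complex. \<forall>z\<in>\<Omega>. g z = (\<Sum>m=1..k. c m * fs m z)))"

end

theory Submission
  imports Defs "HOL-Computational_Algebra.Formal_Power_Series"
begin


definition bQ :: "(nat \<Rightarrow> complex) \<Rightarrow> complex fps" where
  "bQ x = Abs_fps (\<lambda>m. if m = 0 then 0 else x m / fact m)"

definition bellB :: "nat \<Rightarrow> nat \<Rightarrow> (nat \<Rightarrow> complex) \<Rightarrow> complex" where
  "bellB n k x = fact n / fact k * (bQ x ^ k) $ n"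

lemma pow_nth_vanish:
  fixes Q :: "'a::comm_ring_1 fps"
  assumes "Q $ 0 = 0" shows "n < k \<Longrightarrow> (Q ^ k) $ n = 0"
proof (induction k arbitrary: n)
  case 0 then show ?case by simp
next
  case (Suc k)
  have "(Q ^ Suc k) $ n = (\<Sum>i=0..n. Q$i * (Q^k)$(n-i))" by (simp add: fps_mult_nth)
  also have "\<dots> = 0"
  proof (intro sum.neutral ballI)
    fix i assume iin: "i \<in> {0..n}"
    show "Q$i * (Q^k)$(n-i) = 0"
    proof (cases "i = 0")
      case True then show ?thesis using assms by simp
    next
      case False
      then have "n - i < k" using Suc.prems iin by auto
      then show ?thesis using Suc.IH[of "n-i"] by simp
    qed
  qed
  finally show ?case .
qed

lemma bQ_0 [simp]: "bQ x $ 0 = 0" by (simp add: bQ_def)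

lemma bellB_0: "bellB n 0 x = (if n = 0 then 1 else 0)"
  by (simp add: bellB_def)

lemma bellB_vanish: "n < k \<Longrightarrow> bellB n k x = 0"
  by (simp add: bellB_def pow_nth_vanish)

lemma binom_fact_c: "i \<le> n \<Longrightarrow> (of_nat (n choose i) :: complex) = fact n / (fact i * fact (n - i))"
  by (simp add: binomial_fact)

lemma bellB_rec:
  "bellB (Suc n) (Suc k) x = (\<Sum>i\<le>n. of_nat (n choose i) * x (Suc i) * bellB (n-i) k x)"
proof -
  let ?Q = "bQ x"
  have d: "fps_deriv (?Q ^ Suc k) = of_nat (Suc k) * fps_deriv ?Q * ?Q ^ k"
    using fps_deriv_power'[of ?Q "Suc k"] by simp
  have "of_nat (Suc n) * (?Q ^ Suc k) $ Suc n = fps_deriv (?Q ^ Suc k) $ n"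
    unfolding fps_deriv_nth by simp
  also have "\<dots> = (of_nat (Suc k) * fps_deriv ?Q * ?Q ^ k) $ n"
    unfolding d ..
  also have "\<dots> = of_nat (Suc k) * (fps_deriv ?Q * ?Q ^ k) $ n"
    by (simp only: mult.assoc fps_of_nat[symmetric] fps_mult_left_const_nth)
  also have "(fps_deriv ?Q * ?Q ^ k) $ n = (\<Sum>i=0..n. x (Suc i) / fact i * (?Q ^ k) $ (n - i))"
    unfolding fps_mult_nth
  proof (intro sum.cong refl)
    fix i assume "i \<in> {0..n}"
    have "fps_deriv ?Q $ i = of_nat (Suc i) * (x (Suc i) / fact (Suc i))"
      by (simp add: bQ_def)
    also have "\<dots> = x (Suc i) / fact i"
      by (simp only: fact_Suc) (simp add: field_simps del: of_nat_Suc)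
    finally show "fps_deriv ?Q $ i * (?Q ^ k) $ (n - i) = x (Suc i) / fact i * (?Q ^ k) $ (n - i)"
      by simp
  qed
  finally have e: "of_nat (Suc n) * (?Q ^ Suc k) $ Suc n =
      of_nat (Suc k) * (\<Sum>i=0..n. x (Suc i) / fact i * (?Q ^ k) $ (n - i))" .
  have "bellB (Suc n) (Suc k) x = fact n / fact k * ((of_nat (Suc n) * (?Q ^ Suc k) $ Suc n) / of_nat (Suc k))"
    unfolding bellB_def by (simp add: field_simps)
  also have "\<dots> = fact n / fact k * (\<Sum>i=0..n. x (Suc i) / fact i * (?Q ^ k) $ (n - i))"
    unfolding e by (simp del: of_nat_Suc)
  also have "\<dots> = (\<Sum>i\<le>n. of_nat (n choose i) * x (Suc i) * bellB (n-i) k x)"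
    unfolding sum_distrib_left atLeast0AtMost
  proof (intro sum.cong refl)
    fix i assume "i \<in> {..n}"
    then have "i \<le> n" by simp
    then show "fact n / fact k * (x (Suc i) / fact i * (?Q ^ k) $ (n - i)) =
        of_nat (n choose i) * x (Suc i) * bellB (n-i) k x"
      unfolding bellB_def binom_fact_c[OF \<open>i \<le> n\<close>] by (simp add: field_simps)
  qed
  finally show ?thesis .
qed

lemma bellB_diag: "bellB n n x = x 1 ^ n"
proof (induction n)
  case 0 then show ?case by (simp add: bellB_0)
next
  case (Suc n)
  have "bellB (Suc n) (Suc n) x = (\<Sum>i\<le>n. of_nat (n choose i) * x (Suc i) * bellB (n-i) n x)"
    by (rule bellB_rec)
  also have "\<dots> = of_nat (n choose 0) * x (Suc 0) * bellB (n-0) n x"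
    by (subst sum.mono_neutral_right[of "{..n}" "{0}"]) (auto simp: bellB_vanish)  
  finally show ?case using Suc by simp
qed



lemma bellB_subdiag: "bellB (Suc n) n x = of_nat (Suc n choose 2) * x 1 ^ (n - 1) * x 2"
proof (induction n)
  case 0 then show ?case by (simp add: bellB_0)
next
  case (Suc n)
  have "bellB (Suc (Suc n)) (Suc n) x = (\<Sum>i\<le>Suc n. of_nat (Suc n choose i) * x (Suc i) * bellB (Suc n-i) n x)"
    by (rule bellB_rec)
  also have "\<dots> = (\<Sum>i\<in>{0,1}. of_nat (Suc n choose i) * x (Suc i) * bellB (Suc n-i) n x)"
    by (rule sum.mono_neutral_right) (auto simp: bellB_vanish)
  also have "\<dots> = x 1 * bellB (Suc n) n x + of_nat (Suc n) * x 2 * bellB n n x"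
    by (simp add: numeral_2_eq_2)
  also have "\<dots> = of_nat (Suc (Suc n) choose 2) * x 1 ^ n * x 2"
    unfolding Suc bellB_diag
    by (cases n) (simp_all add: algebra_simps numeral_2_eq_2)
  finally show ?case by simp
qed

definition Sset :: "nat \<Rightarrow> nat \<Rightarrow> nat \<Rightarrow> (nat \<Rightarrow> nat) set" where
  "Sset N k n = {js. (\<forall>m. m \<notin> {1..N} \<longrightarrow> js m = 0)
      \<and> (\<Sum>m=1..N. m * js m) = n \<and> (\<Sum>m=1..N. js m) = k}"

definition Fm :: "nat \<Rightarrow> nat \<Rightarrow> nat \<Rightarrow> (nat \<Rightarrow> complex) \<Rightarrow> complex" where
  "Fm N k n y = (\<Sum>js\<in>Sset N k n. \<Prod>m=1..N. y m ^ js m / fact (js m))"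

definition QN :: "nat \<Rightarrow> (nat \<Rightarrow> complex) \<Rightarrow> complex fps" where
  "QN N y = (\<Sum>m=1..N. fps_const (y m) * fps_X ^ m)"

lemma finite_Sset: "finite (Sset N k n)"
proof -
  have "Sset N k n \<subseteq> (\<lambda>g m. if m \<in> {1..N} then g m else 0) ` PiE {1..N} (\<lambda>_. {0..k})"
  proof
    fix js assume js: "js \<in> Sset N k n"
    have le: "js m \<le> k" if "m \<in> {1..N}" for m
    proof -
      have "js m \<le> (\<Sum>m=1..N. js m)" by (rule member_le_sum) (use that in auto)
      then show ?thesis using js by (simp add: Sset_def)
    qed
    have "js = (\<lambda>m. if m \<in> {1..N} then restrict js {1..N} m else 0)"
      using js by (auto simp: Sset_def)
    moreover have "restrict js {1..N} \<in> PiE {1..N} (\<lambda>_. {0..k})"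
      using le by auto
    ultimately show "js \<in> (\<lambda>g m. if m \<in> {1..N} then g m else 0) ` PiE {1..N} (\<lambda>_. {0..k})"
      by blast
  qed
  moreover have "finite (PiE {1..N} (\<lambda>_. {0..k::nat}))" by (rule finite_PiE) auto
  ultimately show ?thesis using finite_subset by blast
qed

lemma Sset_0: "Sset 0 k n = (if k = 0 \<and> n = 0 then {\<lambda>_. 0} else {})"
  by (auto simp: Sset_def)

lemma QN_Suc: "QN (Suc N) y = fps_const (y (Suc N)) * fps_X ^ Suc N + QN N y"
  by (simp add: QN_def)

lemma Sset_Suc_bij:
  "bij_betw (\<lambda>(r, js). js(Suc N := r))
     (SIGMA r:{r\<in>{..k}. Suc N * r \<le> n}. Sset N (k - r) (n - Suc N * r))
     (Sset (Suc N) k n)"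
proof (rule bij_betw_byWitness[where f' = "\<lambda>js. (js (Suc N), js(Suc N := 0))"])
  show "\<forall>a\<in>(SIGMA r:{r\<in>{..k}. Suc N * r \<le> n}. Sset N (k - r) (n - Suc N * r)).
          (\<lambda>js. (js (Suc N), js(Suc N := 0))) ((\<lambda>(r, js). js(Suc N := r)) a) = a"
    by (auto simp: Sset_def fun_eq_iff)
  show "\<forall>a'\<in>Sset (Suc N) k n. (\<lambda>(r, js). js(Suc N := r)) ((\<lambda>js. (js (Suc N), js(Suc N := 0))) a') = a'"
    by auto
  show "(\<lambda>(r, js). js(Suc N := r)) ` (SIGMA r:{r\<in>{..k}. Suc N * r \<le> n}. Sset N (k - r) (n - Suc N * r))
      \<subseteq> Sset (Suc N) k n"
  proof
    fix x assume "x \<in> (\<lambda>(r, js). js(Suc N := r)) ` (SIGMA r:{r\<in>{..k}. Suc N * r \<le> n}. Sset N (k - r) (n - Suc N * r))"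
    then obtain r js where r: "r \<in> {r\<in>{..k}. Suc N * r \<le> n}" and js: "js \<in> Sset N (k - r) (n - Suc N * r)"
      and x: "x = js(Suc N := r)" by auto
    have e1: "(\<Sum>m=1..N. m * (js(Suc N := r)) m) = (\<Sum>m=1..N. m * js m)"
      by (rule sum.cong) auto
    have e2: "(\<Sum>m=1..N. (js(Suc N := r)) m) = (\<Sum>m=1..N. js m)"
      by (rule sum.cong) auto
    show "x \<in> Sset (Suc N) k n"
      using r js e1 e2 unfolding x by (auto simp: Sset_def)
  qed
  show "(\<lambda>js. (js (Suc N), js(Suc N := 0))) ` Sset (Suc N) k n
      \<subseteq> (SIGMA r:{r\<in>{..k}. Suc N * r \<le> n}. Sset N (k - r) (n - Suc N * r))"
  proof
    fix x assume "x \<in> (\<lambda>js. (js (Suc N), js(Suc N := 0))) ` Sset (Suc N) k n"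
    then obtain js where js: "js \<in> Sset (Suc N) k n" and x: "x = (js (Suc N), js(Suc N := 0))" by auto
    have e1: "(\<Sum>m=1..N. m * (js(Suc N := 0)) m) = (\<Sum>m=1..N. m * js m)"
      by (rule sum.cong) auto
    have e2: "(\<Sum>m=1..N. (js(Suc N := 0)) m) = (\<Sum>m=1..N. js m)"
      by (rule sum.cong) auto
    have s1: "(\<Sum>m=1..N. m * js m) + Suc N * js (Suc N) = n"
      using js by (simp add: Sset_def)
    have s2: "(\<Sum>m=1..N. js m) + js (Suc N) = k"
      using js by (simp add: Sset_def)
    show "x \<in> (SIGMA r:{r\<in>{..k}. Suc N * r \<le> n}. Sset N (k - r) (n - Suc N * r))"
      using js e1 e2 s1 s2 unfolding x by (auto simp: Sset_def)
  qed
qed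

lemma multinom: "Fm N k n y = (QN N y ^ k) $ n / fact k"
proof (induction N arbitrary: k n)
  case 0
  show ?case by (cases k) (simp_all add: Fm_def Sset_0 QN_def)
next
  case (Suc N)
  let ?c = "y (Suc N)"
  let ?A = "{r\<in>{..k}. Suc N * r \<le> n}"
  have "Fm (Suc N) k n y = (\<Sum>p\<in>(SIGMA r:?A. Sset N (k - r) (n - Suc N * r)).
          \<Prod>m=1..Suc N. y m ^ (case p of (r, js) \<Rightarrow> js(Suc N := r)) m / fact ((case p of (r, js) \<Rightarrow> js(Suc N := r)) m))"
    unfolding Fm_def by (rule sum.reindex_bij_betw[OF Sset_Suc_bij, symmetric])
  also have "\<dots> = (\<Sum>(r, js)\<in>(SIGMA r:?A. Sset N (k - r) (n - Suc N * r)).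
          \<Prod>m=1..Suc N. y m ^ (js(Suc N := r)) m / fact ((js(Suc N := r)) m))"
    by (rule sum.cong) auto
  also have "\<dots> = (\<Sum>r\<in>?A. \<Sum>js\<in>Sset N (k - r) (n - Suc N * r).
          (\<Prod>m=1..Suc N. y m ^ (js(Suc N := r)) m / fact ((js(Suc N := r)) m)))"
    by (rule sum.Sigma[symmetric]) (auto simp: finite_Sset)
  also have "\<dots> = (\<Sum>r\<in>?A. ?c ^ r / fact r * Fm N (k - r) (n - Suc N * r) y)"
    unfolding Fm_def sum_distrib_left
  proof (intro sum.cong refl)
    fix r js
    have "(\<Prod>m=1..N. y m ^ (js(Suc N := r)) m / fact ((js(Suc N := r)) m)) =
          (\<Prod>m=1..N. y m ^ js m / fact (js m))"
      by (rule prod.cong) auto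
    then show "(\<Prod>m=1..Suc N. y m ^ (js(Suc N := r)) m / fact ((js(Suc N := r)) m)) =
         ?c ^ r / fact r * (\<Prod>m=1..N. y m ^ js m / fact (js m))"
      by simp
  qed
  also have "\<dots> = (\<Sum>r\<in>?A. ?c ^ r / fact r * ((QN N y ^ (k - r)) $ (n - Suc N * r) / fact (k - r)))"
    by (simp add: Suc.IH)
  also have "\<dots> = (\<Sum>r\<le>k. if Suc N * r \<le> n then ?c ^ r / fact r * ((QN N y ^ (k - r)) $ (n - Suc N * r) / fact (k - r)) else 0)"
    by (rule sum.inter_filter) simp
  also have "\<dots> = (\<Sum>r\<le>k. of_nat (k choose r) * ((fps_const ?c * fps_X ^ Suc N) ^ r * QN N y ^ (k - r)) $ n) / fact k"
    unfolding sum_divide_distrib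
  proof (intro sum.cong refl)
    fix r assume "r \<in> {..k}"
    then have rk: "r \<le> k" by simp
    have eq: "(fps_const ?c * fps_X ^ Suc N) ^ r * QN N y ^ (k - r) =
          fps_const (?c ^ r) * (fps_X ^ (Suc N * r) * QN N y ^ (k - r))"
      by (simp only: power_mult_distrib fps_const_power power_mult[symmetric] mult.assoc)
    then have "((fps_const ?c * fps_X ^ Suc N) ^ r * QN N y ^ (k - r)) $ n =
        ?c ^ r * (if n < Suc N * r then 0 else (QN N y ^ (k - r)) $ (n - Suc N * r))"
      unfolding eq by (simp only: fps_mult_left_const_nth fps_X_power_mult_nth)
    then show "(if Suc N * r \<le> n then ?c ^ r / fact r * ((QN N y ^ (k - r)) $ (n - Suc N * r) / fact (k - r)) else 0) =
      of_nat (k choose r) * ((fps_const ?c * fps_X ^ Suc N) ^ r * QN N y ^ (k - r)) $ n / fact k"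
      unfolding binom_fact_c[OF rk] by (auto simp: field_simps)
  qed
  also have "\<dots> = (\<Sum>r\<le>k. (of_nat (k choose r) * (fps_const ?c * fps_X ^ Suc N) ^ r * QN N y ^ (k - r)) $ n) / fact k"
    by (simp only: mult.assoc fps_of_nat[symmetric] fps_mult_left_const_nth)
  also have "\<dots> = (QN (Suc N) y ^ k) $ n / fact k"
    unfolding QN_Suc binomial_ring fps_sum_nth ..
  finally show ?case .
qed

lemma trunc_pow:
  fixes P Q :: "'a::comm_ring_1 fps"
  assumes "P $ 0 = 0" "Q $ 0 = 0" "\<And>j. 1 \<le> j \<Longrightarrow> j \<le> p \<Longrightarrow> P $ j = Q $ j"
  shows "n < p + k \<Longrightarrow> (P ^ k) $ n = (Q ^ k) $ n"
proof (induction k arbitrary: n)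
  case 0 then show ?case by simp
next
  case (Suc k)
  have "(P ^ Suc k) $ n = (\<Sum>i=0..n. P$i * (P^k)$(n-i))" by (simp add: fps_mult_nth)
  also have "\<dots> = (\<Sum>i=0..n. Q$i * (Q^k)$(n-i))"
  proof (intro sum.cong refl)
    fix i assume iin: "i \<in> {0..n}"
    show "P$i * (P^k)$(n-i) = Q$i * (Q^k)$(n-i)"
    proof (cases "i = 0")
      case True then show ?thesis using assms by simp
    next
      case False
      show ?thesis
      proof (cases "i \<le> p")
        case True
        then have "n - i < p + k" using Suc.prems False iin by auto
        then show ?thesis using Suc.IH[of "n-i"] assms(3)[of i] True False by simp
      next
        case False
        then have "n - i < k" using Suc.prems iin by auto
        then show ?thesis using pow_nth_vanish[OF assms(1)] pow_nth_vanish[OF assms(2)] by simp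
      qed
    qed
  qed
  also have "\<dots> = (Q ^ Suc k) $ n" by (simp add: fps_mult_nth)
  finally show ?case .
qed

lemma QN_nth: "QN N y $ j = (if 1 \<le> j \<and> j \<le> N then y j else 0)"
  unfolding QN_def fps_sum_nth by (simp add: fps_X_power_nth if_distrib cong: if_cong)

lemma bell_seqs_Sset: "bell_seqs i n = Sset (i - n + 1) n i"
  unfolding bell_seqs_def Sset_def by auto

lemma inc_bell_eq:
  assumes "1 \<le> l" "l \<le> i"
  shows "inc_bell i l z = bellB i l z"
proof -
  let ?y = "\<lambda>m. z m / fact m"
  let ?N = "i - l + 1"
  have "inc_bell i l z = fact i * Fm ?N l i ?y"
    unfolding inc_bell_def Fm_def bell_seqs_Sset sum_distrib_left
  proof (intro sum.cong refl)
    fix js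
    show "of_nat (fact i) / of_nat (\<Prod>m=1..?N. fact (js m)) * (\<Prod>m=1..?N. (z m / of_nat (fact m)) ^ js m) =
        fact i * (\<Prod>m=1..?N. ?y m ^ js m / fact (js m))"
      by (simp add: prod_dividef of_nat_prod)
  qed
  also have "\<dots> = fact i / fact l * (QN ?N ?y ^ l) $ i"
    by (simp add: multinom)
  also have "(QN ?N ?y ^ l) $ i = (bQ z ^ l) $ i"
    by (rule trunc_pow[of _ _ ?N]) (use assms in \<open>auto simp: QN_nth bQ_def\<close>)
  finally show ?thesis by (simp add: bellB_def)
qed



lemma faa_di_bruno:
  assumes A: "open A" and S: "open S" and f: "f holomorphic_on A" and T: "T holomorphic_on S"
    and TS: "T ` S \<subseteq> A" and z: "z \<in> S"
  shows "(deriv ^^ n) (\<lambda>w. f (T w)) z = (\<Sum>l\<le>n. (deriv ^^ l) f (T z) * bellB n l (\<lambda>m. (deriv ^^ m) T z))"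
  using f
proof (induction n arbitrary: f rule: less_induct)
  case (less n)
  let ?x = "\<lambda>m. (deriv ^^ m) T z"
  show ?case
  proof (cases n)
    case 0 then show ?thesis by (simp add: bellB_0)
  next
    case (Suc n')
    have fhol: "f holomorphic_on A" by (rule less.prems)
    have df: "deriv f holomorphic_on A" using fhol A by (rule holomorphic_deriv)
    have dT: "deriv T holomorphic_on S" using T S by (rule holomorphic_deriv)
    have dfT: "(\<lambda>w. deriv f (T w)) holomorphic_on S"
      using holomorphic_on_compose[OF T holomorphic_on_subset[OF df TS]] by (simp add: o_def)
    have ev: "eventually (\<lambda>w. deriv (\<lambda>w. f (T w)) w = deriv T w * deriv f (T w)) (nhds z)"
    proof -
      have "eventually (\<lambda>w. w \<in> S) (nhds z)" using S z by (rule eventually_nhds_in_open)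
      then show ?thesis
      proof eventually_elim
        case (elim w)
        have "T field_differentiable at w" using T S elim holomorphic_on_imp_differentiable_at by blast
        moreover have "f field_differentiable at (T w)"
          using fhol A TS elim holomorphic_on_imp_differentiable_at by blast
        ultimately have "deriv (f \<circ> T) w = deriv f (T w) * deriv T w" by (rule deriv_chain)
        then show ?case by (simp add: o_def mult.commute)
      qed
    qed
    have "(deriv ^^ n) (\<lambda>w. f (T w)) z = (deriv ^^ n') (deriv (\<lambda>w. f (T w))) z"
      unfolding Suc funpow_Suc_right by simp
    also have "\<dots> = (deriv ^^ n') (\<lambda>w. deriv T w * deriv f (T w)) z"
      by (rule higher_deriv_cong_ev[OF ev refl])
    also have "\<dots> = (\<Sum>i=0..n'. of_nat (n' choose i) * (deriv ^^ i) (deriv T) z * (deriv ^^ (n'-i)) (\<lambda>w. deriv f (T w)) z)"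
      by (rule higher_deriv_mult[OF dT dfT S z])
    also have "\<dots> = (\<Sum>i\<le>n'. of_nat (n' choose i) * ?x (Suc i) *
        (\<Sum>l\<le>n'. (deriv ^^ Suc l) f (T z) * bellB (n'-i) l ?x))"
      unfolding atLeast0AtMost
    proof (intro sum.cong refl)
      fix i assume i: "i \<in> {..n'}"
      have "(deriv ^^ (n'-i)) (\<lambda>w. deriv f (T w)) z = (\<Sum>l\<le>n'-i. (deriv ^^ l) (deriv f) (T z) * bellB (n'-i) l ?x)"
        by (rule less.IH) (use Suc df in auto)
      also have "\<dots> = (\<Sum>l\<le>n'. (deriv ^^ Suc l) f (T z) * bellB (n'-i) l ?x)"
        unfolding funpow_Suc_right comp_apply
        by (rule sum.mono_neutral_left) (auto simp: bellB_vanish)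
      finally show "of_nat (n' choose i) * (deriv ^^ i) (deriv T) z * (deriv ^^ (n'-i)) (\<lambda>w. deriv f (T w)) z
         = of_nat (n' choose i) * ?x (Suc i) * (\<Sum>l\<le>n'. (deriv ^^ Suc l) f (T z) * bellB (n'-i) l ?x)"
        by (simp only: funpow_Suc_right comp_apply)
    qed
    also have "\<dots> = (\<Sum>l\<le>n'. (deriv ^^ Suc l) f (T z) * bellB (Suc n') (Suc l) ?x)"
      unfolding bellB_rec sum_distrib_left sum_distrib_right
      by (subst sum.swap) (simp add: algebra_simps)
    also have "\<dots> = (\<Sum>l\<le>n. (deriv ^^ l) f (T z) * bellB n l ?x)"
      unfolding Suc sum.atMost_Suc_shift by (simp add: bellB_0)
    finally show ?thesis .
  qed
qed



function tri :: "(nat \<Rightarrow> complex) \<Rightarrow> (nat \<Rightarrow> nat \<Rightarrow> complex) \<Rightarrow> nat \<Rightarrow> nat \<Rightarrow> complex" where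
  "tri R M K l = (if K < l then 0 else (R l - (\<Sum>j\<in>{l<..K}. tri R M K j * M j l)) / M l l)"
  by pat_completeness auto
termination by (relation "Wellfounded.measure (\<lambda>(R, M, K, l). K - l)") auto

declare tri.simps [simp del]

lemma tri_eq:
  assumes "l \<le> K" "M l l \<noteq> 0"
  shows "(\<Sum>j\<in>{l..K}. tri R M K j * M j l) = R l"
proof -
  have "{l..K} = insert l {l<..K}" using assms(1) by auto
  then have "(\<Sum>j\<in>{l..K}. tri R M K j * M j l) = tri R M K l * M l l + (\<Sum>j\<in>{l<..K}. tri R M K j * M j l)"
    by simp
  also have "tri R M K l * M l l = R l - (\<Sum>j\<in>{l<..K}. tri R M K j * M j l)"
    using assms by (subst tri.simps) simp
  finally show ?thesis by simp
qed

definition Cc :: "(complex \<Rightarrow> complex) \<Rightarrow> (complex \<Rightarrow> complex) \<Rightarrow> nat \<Rightarrow> nat \<Rightarrow> complex \<Rightarrow> complex" where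
  "Cc T h j l z = (\<Sum>i\<le>j. of_nat (j choose i) * bellB i l (\<lambda>m. (deriv ^^ m) T z) * (deriv ^^ (j - i)) h z)"

lemma Cc_vanish: "j < l \<Longrightarrow> Cc T h j l z = 0"
  unfolding Cc_def by (intro sum.neutral) (auto simp: bellB_vanish)

lemma Cc_diag: "Cc T h l l z = deriv T z ^ l * h z"
proof -
  have "Cc T h l l z = of_nat (l choose l) * bellB l l (\<lambda>m. (deriv ^^ m) T z) * (deriv ^^ (l - l)) h z"
    unfolding Cc_def by (rule sum.mono_neutral_right[of "{..l}" "{l}", simplified]) (auto simp: bellB_vanish)
  then show ?thesis by (simp add: bellB_diag)
qed

lemma Cc_0: "Cc T h j 0 z = (deriv ^^ j) h z"
proof -
  have "Cc T h j 0 z = of_nat (j choose 0) * bellB 0 0 (\<lambda>m. (deriv ^^ m) T z) * (deriv ^^ (j - 0)) h z"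
    unfolding Cc_def by (rule sum.mono_neutral_right[of "{..j}" "{0}", simplified]) (auto simp: bellB_0)
  then show ?thesis by (simp add: bellB_0)
qed

lemma Cc_subdiag: "Cc T h (Suc (Suc n)) (Suc n) z =
    of_nat (Suc (Suc n)) * deriv T z ^ Suc n * deriv h z
    + of_nat (Suc (Suc n) choose 2) * deriv T z ^ n * deriv (deriv T) z * h z"
proof -
  let ?x = "\<lambda>m. (deriv ^^ m) T z"
  have "Cc T h (Suc (Suc n)) (Suc n) z = (\<Sum>i\<in>{Suc n, Suc (Suc n)}. of_nat (Suc (Suc n) choose i) * bellB i (Suc n) ?x * (deriv ^^ (Suc (Suc n) - i)) h z)"
    unfolding Cc_def by (rule sum.mono_neutral_right) (auto simp: bellB_vanish)
  also have "\<dots> = of_nat (Suc (Suc n)) * bellB (Suc n) (Suc n) ?x * deriv h z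
      + bellB (Suc (Suc n)) (Suc n) ?x * h z"
    by simp
  also have "\<dots> = of_nat (Suc (Suc n)) * deriv T z ^ Suc n * deriv h z
    + of_nat (Suc (Suc n) choose 2) * deriv T z ^ n * deriv (deriv T) z * h z"
    unfolding bellB_diag bellB_subdiag by (simp add: numeral_2_eq_2)
  finally show ?thesis .
qed

lemma bellB_hol:
  assumes "\<And>m. (\<lambda>z. x z m) holomorphic_on S"
  shows "(\<lambda>z. bellB n l (x z)) holomorphic_on S"
proof (induction l arbitrary: n)
  case 0 then show ?case by (simp add: bellB_0)
next
  case (Suc l)
  show ?case
  proof (cases n)
    case 0 then show ?thesis by (simp add: bellB_vanish)
  next
    case (Suc n')
    show ?thesis unfolding Suc bellB_rec
      by (intro holomorphic_intros assms Suc.IH)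
  qed
qed

lemma Cc_hol:
  assumes "open S" "T holomorphic_on S" "h holomorphic_on S"
  shows "(\<lambda>z. Cc T h j l z) holomorphic_on S"
  unfolding Cc_def
  by (intro holomorphic_intros bellB_hol holomorphic_higher_deriv assms)

lemma key_identity:
  assumes "open A" "open S" "f holomorphic_on A" "T holomorphic_on S" "T ` S \<subseteq> A"
    "h holomorphic_on S" "z \<in> S"
  shows "(deriv ^^ j) (\<lambda>w. f (T w) * h w) z = (\<Sum>l\<le>j. (deriv ^^ l) f (T z) * Cc T h j l z)"
proof -
  let ?x = "\<lambda>m. (deriv ^^ m) T z"
  have fT: "(\<lambda>w. f (T w)) holomorphic_on S"
    using holomorphic_on_compose[OF assms(4) holomorphic_on_subset[OF assms(3) assms(5)]] by (simp add: o_def)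
  have "(deriv ^^ j) (\<lambda>w. f (T w) * h w) z =
      (\<Sum>i=0..j. of_nat (j choose i) * (deriv ^^ i) (\<lambda>w. f (T w)) z * (deriv ^^ (j - i)) h z)"
    by (rule higher_deriv_mult[OF fT assms(6) assms(2) assms(7)])
  also have "\<dots> = (\<Sum>i\<le>j. of_nat (j choose i) * (\<Sum>l\<le>j. (deriv ^^ l) f (T z) * bellB i l ?x) * (deriv ^^ (j - i)) h z)"
    unfolding atLeast0AtMost
  proof (intro sum.cong refl)
    fix i assume i: "i \<in> {..j}"
    have "(deriv ^^ i) (\<lambda>w. f (T w)) z = (\<Sum>l\<le>i. (deriv ^^ l) f (T z) * bellB i l ?x)"
      by (rule faa_di_bruno) (use assms in auto)
    also have "\<dots> = (\<Sum>l\<le>j. (deriv ^^ l) f (T z) * bellB i l ?x)"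
      by (rule sum.mono_neutral_left) (use i in \<open>auto simp: bellB_vanish\<close>)
    finally show "of_nat (j choose i) * (deriv ^^ i) (\<lambda>w. f (T w)) z * (deriv ^^ (j - i)) h z =
        of_nat (j choose i) * (\<Sum>l\<le>j. (deriv ^^ l) f (T z) * bellB i l ?x) * (deriv ^^ (j - i)) h z"
      by simp
  qed
  also have "\<dots> = (\<Sum>l\<le>j. (deriv ^^ l) f (T z) * Cc T h j l z)"
    unfolding Cc_def sum_distrib_left sum_distrib_right
    by (subst sum.swap) (simp add: algebra_simps)
  finally show ?thesis .
qed



lemma choose2_c: "2 * (of_nat (Suc (Suc n) choose 2) :: complex) = of_nat (Suc (Suc n)) * of_nat (Suc n)"
proof -
  have "2 * (Suc (Suc n) choose 2) = Suc (Suc n) * Suc n"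
    by (induction n) (simp_all add: numeral_2_eq_2)
  then have "(of_nat (2 * (Suc (Suc n) choose 2)) :: complex) = of_nat (Suc (Suc n) * Suc n)"
    by (simp only:)
  then show ?thesis by (simp only: of_nat_mult of_nat_numeral)
qed

theorem theorem1:
  fixes k :: nat
    and \<Omega>1 \<Omega>2 :: "complex set"
    and T h :: "complex \<Rightarrow> complex"
    and a :: "nat \<Rightarrow> complex \<Rightarrow> complex"
    and f :: "nat \<Rightarrow> complex \<Rightarrow> complex"
  assumes k: "k \<ge> 2"
    and dom1: "open \<Omega>1" "connected \<Omega>1"
    and dom2: "open \<Omega>2" "connected \<Omega>2"
    and T_hol: "T holomorphic_on \<Omega>2" and T_inj: "inj_on T \<Omega>2" and T_onto: "T ` \<Omega>2 = \<Omega>1"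
    and h_hol: "h holomorphic_on \<Omega>2"
    and h_branch: "\<forall>z\<in>\<Omega>2. h z ^ 2 * deriv T z ^ (k - 1) = 1"
    and a_hol: "\<forall>j\<le>k-2. a j holomorphic_on \<Omega>1"
    and base: "solution_base \<Omega>1 k a f"
  shows "\<exists>b :: nat \<Rightarrow> complex \<Rightarrow> complex.
     (\<forall>j\<le>k-2. b j holomorphic_on \<Omega>2) \<and>
     solution_base \<Omega>2 k b (\<lambda>m z. f m (T z) * h z) \<and>
     (\<forall>l\<in>{1..k-2}. \<forall>z\<in>\<Omega>2.
        a l (T z) * deriv T z ^ (k - l) =
          (\<Sum>j=l..k-1. (if j = k - 1 then 0 else b j z) *
             (\<Sum>i=l..j. of_nat (j choose i)
                * (inc_bell i l (\<lambda>m. (deriv ^^ m) T z) / deriv T z ^ l)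
                * ((deriv ^^ (j - i)) h z / h z)))
        + (\<Sum>i=l..k-1. of_nat (k choose i)
                * (inc_bell i l (\<lambda>m. (deriv ^^ m) T z) / deriv T z ^ l)
                * ((deriv ^^ (k - i)) h z / h z))
        + inc_bell k l (\<lambda>m. (deriv ^^ m) T z) / deriv T z ^ l) \<and>
     (\<forall>z\<in>\<Omega>2. a 0 (T z) * deriv T z ^ k =
        (deriv ^^ k) h z / h z + (\<Sum>j<k-1. b j z * ((deriv ^^ j) h z / h z)))"
proof -
  obtain k' where kk: "k = Suc (Suc k')" using k by (metis add_2_eq_Suc le_Suc_ex add.commute)
  have k1: "k - 1 = Suc k'" and k2: "k - 2 = k'" using kk by auto
  define B where "B = (\<lambda>j z. tri (\<lambda>l. a l (T z) * deriv T z ^ k * h z - Cc T h k l z) (\<lambda>j l. Cc T h j l z) (k - 2) j)"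
  have nzT: "deriv T z \<noteq> 0" if "z \<in> \<Omega>2" for z
    using h_branch that k1 by (metis mult_zero_right power_0_left zero_neq_one Zero_not_Suc)
  have nzh: "h z \<noteq> 0" if "z \<in> \<Omega>2" for z
    using h_branch that by (metis mult_zero_left power_0_left zero_neq_one zero_neq_numeral)
  have dThol: "deriv T holomorphic_on \<Omega>2" using T_hol dom2(1) by (rule holomorphic_deriv)
  have TS: "T ` \<Omega>2 \<subseteq> \<Omega>1" using T_onto by simp
  have Ccnz: "Cc T h l l z \<noteq> 0" if "z \<in> \<Omega>2" for l z
    using nzT[OF that] nzh[OF that] by (simp add: Cc_diag)
  have triB: "(\<Sum>j\<in>{l..k-2}. B j z * Cc T h j l z) = a l (T z) * deriv T z ^ k * h z - Cc T h k l z"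
    if "z \<in> \<Omega>2" "l \<le> k - 2" for z l
    unfolding B_def by (rule tri_eq) (use that Ccnz in auto)
  have sub: "Cc T h k (k - 1) z = 0" if z: "z \<in> \<Omega>2" for z
  proof -
    have dh: "(h has_field_derivative deriv h z) (at z)" by (rule holomorphic_derivI[OF h_hol dom2(1) z])
    have dT2: "(deriv T has_field_derivative deriv (deriv T) z) (at z)" by (rule holomorphic_derivI[OF dThol dom2(1) z])
    have D1: "((\<lambda>w. h w ^ 2 * deriv T w ^ (k-1)) has_field_derivative
        (of_nat 2 * (deriv h z * h z ^ (2 - Suc 0))) * deriv T z ^ (k-1)
        + (of_nat (k-1) * (deriv (deriv T) z * deriv T z ^ (k - 1 - Suc 0))) * h z ^ 2) (at z)"
      by (rule DERIV_mult[OF DERIV_power[OF dh] DERIV_power[OF dT2]])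
    have D0: "((\<lambda>w. h w ^ 2 * deriv T w ^ (k-1)) has_field_derivative 0) (at z)"
      by (rule has_field_derivative_transform_within_open[OF DERIV_const dom2(1) z]) (use h_branch in auto)
    have E: "(of_nat 2 * (deriv h z * h z ^ (2 - Suc 0))) * deriv T z ^ (k-1)
        + (of_nat (k-1) * (deriv (deriv T) z * deriv T z ^ (k - 1 - Suc 0))) * h z ^ 2 = 0"
      by (rule DERIV_unique[OF D1 D0])
    then have E': "2 * deriv h z * h z * deriv T z ^ Suc k' + of_nat (Suc k') * deriv (deriv T) z * deriv T z ^ k' * h z ^ 2 = 0"
      unfolding k1 by (simp add: algebra_simps)
    have "2 * h z * Cc T h k (k - 1) z = of_nat (Suc (Suc k')) *
        (2 * deriv h z * h z * deriv T z ^ Suc k' + of_nat (Suc k') * deriv (deriv T) z * deriv T z ^ k' * h z ^ 2)"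
    proof -
      have cs: "Cc T h k (k - 1) z = of_nat (Suc (Suc k')) * deriv T z ^ Suc k' * deriv h z
        + of_nat (Suc (Suc k') choose 2) * deriv T z ^ k' * deriv (deriv T) z * h z"
        using Cc_subdiag[of T h k' z] kk k1 by simp
      have "2 * h z * Cc T h k (k - 1) z = 2 * h z * (of_nat (Suc (Suc k')) * deriv T z ^ Suc k' * deriv h z)
         + (2 * of_nat (Suc (Suc k') choose 2)) * deriv T z ^ k' * deriv (deriv T) z * h z * h z"
        unfolding cs by (simp add: algebra_simps del: of_nat_Suc)
      also have "\<dots> = of_nat (Suc (Suc k')) *
        (2 * deriv h z * h z * deriv T z ^ Suc k' + of_nat (Suc k') * deriv (deriv T) z * deriv T z ^ k' * h z ^ 2)"
        unfolding choose2_c by (simp add: algebra_simps power2_eq_square del: of_nat_Suc)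
      finally show ?thesis .
    qed
    then have "2 * h z * Cc T h k (k - 1) z = 0" using E' by simp
    then show ?thesis using nzh[OF z] by simp
  qed
  have ODE_id: "(deriv ^^ k) (\<lambda>w. g (T w) * h w) z + (\<Sum>j<k-1. B j z * (deriv ^^ j) (\<lambda>w. g (T w) * h w) z)
      = deriv T z ^ k * h z * ((deriv ^^ k) g (T z) + (\<Sum>j<k-1. a j (T z) * (deriv ^^ j) g (T z)))"
    if g: "g holomorphic_on \<Omega>1" and z: "z \<in> \<Omega>2" for g z
  proof -
    let ?F = "\<lambda>l. (deriv ^^ l) g (T z)"
    have KI: "(deriv ^^ j) (\<lambda>w. g (T w) * h w) z = (\<Sum>l\<le>k. ?F l * Cc T h j l z)" if "j \<le> k" for j
    proof -
      have "(deriv ^^ j) (\<lambda>w. g (T w) * h w) z = (\<Sum>l\<le>j. ?F l * Cc T h j l z)"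
        by (rule key_identity[OF dom1(1) dom2(1) g T_hol TS h_hol z])
      also have "\<dots> = (\<Sum>l\<le>k. ?F l * Cc T h j l z)"
        by (rule sum.mono_neutral_left) (use that in \<open>auto simp: Cc_vanish\<close>)
      finally show ?thesis .
    qed
    define D where "D = (\<lambda>l. Cc T h k l z + (\<Sum>j<k-1. B j z * Cc T h j l z))"
    have "(deriv ^^ k) (\<lambda>w. g (T w) * h w) z + (\<Sum>j<k-1. B j z * (deriv ^^ j) (\<lambda>w. g (T w) * h w) z)
        = (\<Sum>l\<le>k. ?F l * Cc T h k l z) + (\<Sum>j<k-1. B j z * (\<Sum>l\<le>k. ?F l * Cc T h j l z))"
      using KI by simp
    also have "\<dots> = (\<Sum>l\<le>k. ?F l * D l)"
      unfolding D_def sum_distrib_left distrib_left sum.distrib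
      by (subst (2) sum.swap) (simp add: algebra_simps)
    also have "\<dots> = (\<Sum>l<k-1. ?F l * D l) + ?F (k-1) * D (k-1) + ?F k * D k"
      unfolding kk by (simp add: lessThan_Suc_atMost[symmetric])
    also have "\<dots> = deriv T z ^ k * h z * (?F k + (\<Sum>j<k-1. a j (T z) * ?F j))"
    proof -
      have Dl: "D l = a l (T z) * deriv T z ^ k * h z" if "l < k - 1" for l
      proof -
        have "(\<Sum>j<k-1. B j z * Cc T h j l z) = (\<Sum>j\<in>{l..k-2}. B j z * Cc T h j l z)"
          by (rule sum.mono_neutral_right) (use that kk in \<open>auto simp: Cc_vanish\<close>)
        also have "\<dots> = a l (T z) * deriv T z ^ k * h z - Cc T h k l z"
          by (rule triB) (use z that kk in auto)
        finally show ?thesis unfolding D_def by simp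
      qed
      have Dk1: "D (k-1) = 0"
        unfolding D_def using sub[OF z] by (simp add: Cc_vanish)
      have Dk: "D k = deriv T z ^ k * h z"
        unfolding D_def using kk by (simp add: Cc_vanish Cc_diag)
      show ?thesis
        using Dl Dk1 Dk by (simp add: algebra_simps sum_distrib_left)
    qed
    finally show ?thesis .
  qed
  have Bhol: "B j holomorphic_on \<Omega>2" if "j \<le> k - 2" for j
    using that
  proof (induction "k - 2 - j" arbitrary: j rule: less_induct)
    case less
    have IH: "B i holomorphic_on \<Omega>2" if "i \<in> {j<..k-2}" for i
      using less.hyps[of i] that by auto
    have eq: "B j = (\<lambda>z. (a j (T z) * deriv T z ^ k * h z - Cc T h k j z - (\<Sum>i\<in>{j<..k-2}. B i z * Cc T h i j z)) / Cc T h j j z)"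
      using less.prems unfolding B_def by (auto simp: fun_eq_iff tri.simps[of _ _ _ j])
    have aT: "(\<lambda>z. a j (T z)) holomorphic_on \<Omega>2"
      using holomorphic_on_compose_gen[OF T_hol _ TS, of "a j"] a_hol less.prems by (simp add: o_def)
    show ?case unfolding eq
      by (rule holomorphic_on_divide)
         (intro holomorphic_intros aT T_hol h_hol dThol IH Cc_hol dom2(1) | assumption | rule Ccnz)+
  qed
  from base have fsol: "\<forall>m\<in>{1..k}. solves_ode \<Omega>1 k a (f m)"
    and findep: "\<forall>c::nat \<Rightarrow> complex. (\<forall>z\<in>\<Omega>1. (\<Sum>m=1..k. c m * f m z) = 0) \<longrightarrow> (\<forall>m\<in>{1..k}. c m = 0)"
    and fspan: "\<forall>g. solves_ode \<Omega>1 k a g \<longrightarrow> (\<exists>c::nat \<Rightarrow> complex. \<forall>z\<in>\<Omega>1. g z = (\<Sum>m=1..k. c m * f m z))"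
    unfolding solution_base_def by blast+
  have gsol: "solves_ode \<Omega>2 k B (\<lambda>z. g (T z) * h z)" if "solves_ode \<Omega>1 k a g" for g
  proof -
    have g: "g holomorphic_on \<Omega>1" using that by (simp add: solves_ode_def)
    have "(\<lambda>z. g (T z) * h z) holomorphic_on \<Omega>2"
      using holomorphic_on_compose_gen[OF T_hol g TS] h_hol by (intro holomorphic_intros) (simp_all add: o_def)
    moreover have "(deriv ^^ k) (\<lambda>w. g (T w) * h w) z + (\<Sum>j<k-1. B j z * (deriv ^^ j) (\<lambda>w. g (T w) * h w) z) = 0"
      if z: "z \<in> \<Omega>2" for z
    proof -
      have "T z \<in> \<Omega>1" using TS z by auto
      then have "(deriv ^^ k) g (T z) + (\<Sum>j<k-1. a j (T z) * (deriv ^^ j) g (T z)) = 0"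
        using \<open>solves_ode \<Omega>1 k a g\<close> by (simp add: solves_ode_def)
      then show ?thesis using ODE_id[OF g z] by simp
    qed
    ultimately show ?thesis by (simp add: solves_ode_def)
  qed
  have part2: "solution_base \<Omega>2 k B (\<lambda>m z. f m (T z) * h z)"
    unfolding solution_base_def
  proof (intro conjI)
    show "\<forall>m\<in>{1..k}. solves_ode \<Omega>2 k B (\<lambda>z. f m (T z) * h z)" using fsol gsol by blast
  next
    show "\<forall>c. (\<forall>z\<in>\<Omega>2. (\<Sum>m=1..k. c m * (f m (T z) * h z)) = 0) \<longrightarrow> (\<forall>m\<in>{1..k}. c m = 0)"
    proof (intro allI impI)
      fix c :: "nat \<Rightarrow> complex" assume H: "\<forall>z\<in>\<Omega>2. (\<Sum>m=1..k. c m * (f m (T z) * h z)) = 0"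
      have "\<forall>w\<in>\<Omega>1. (\<Sum>m=1..k. c m * f m w) = 0"
      proof
        fix w assume "w \<in> \<Omega>1"
        then obtain z where z: "z \<in> \<Omega>2" "w = T z" using T_onto by auto
        have "(\<Sum>m=1..k. c m * f m w) * h z = 0" using H z by (simp add: sum_distrib_right mult.assoc)
        then show "(\<Sum>m=1..k. c m * f m w) = 0" using nzh[OF z(1)] by simp
      qed
      then show "\<forall>m\<in>{1..k}. c m = 0" using findep by blast
    qed
  next
    show "\<forall>g. solves_ode \<Omega>2 k B g \<longrightarrow> (\<exists>c. \<forall>z\<in>\<Omega>2. g z = (\<Sum>m=1..k. c m * (f m (T z) * h z)))"
    proof (intro allI impI)
      fix g assume sg: "solves_ode \<Omega>2 k B g"
      obtain Ti where Ti_hol: "Ti holomorphic_on T ` \<Omega>2" and Ti: "\<And>z. z \<in> \<Omega>2 \<Longrightarrow> Ti (T z) = z"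
        using holomorphic_has_inverse[OF T_hol dom2(1) T_inj] by blast
      have TiS: "Ti ` \<Omega>1 \<subseteq> \<Omega>2" using T_onto Ti by auto
      define F where "F = (\<lambda>w. g (Ti w) / h (Ti w))"
      have ghol: "g holomorphic_on \<Omega>2" using sg by (simp add: solves_ode_def)
      have Ti_hol': "Ti holomorphic_on \<Omega>1" using Ti_hol T_onto by simp
      have Fhol: "F holomorphic_on \<Omega>1"
      proof -
        have "(g \<circ> Ti) holomorphic_on \<Omega>1" by (rule holomorphic_on_compose_gen[OF Ti_hol' ghol TiS])
        moreover have "(h \<circ> Ti) holomorphic_on \<Omega>1" by (rule holomorphic_on_compose_gen[OF Ti_hol' h_hol TiS])
        ultimately show ?thesis unfolding F_def using nzh TiS
          by (intro holomorphic_on_divide) (auto simp: o_def)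
      qed
      have FT: "F (T z) * h z = g z" if "z \<in> \<Omega>2" for z using Ti[OF that] nzh[OF that] by (simp add: F_def)
      have Fsol: "solves_ode \<Omega>1 k a F"
        unfolding solves_ode_def
      proof (intro conjI ballI Fhol)
        fix w assume "w \<in> \<Omega>1"
        then obtain z where z: "z \<in> \<Omega>2" "w = T z" using T_onto by auto
        have hd: "(deriv ^^ j) (\<lambda>w. F (T w) * h w) z = (deriv ^^ j) g z" for j
        proof (rule higher_deriv_cong_ev[OF _ refl])
          have "eventually (\<lambda>w. w \<in> \<Omega>2) (nhds z)" using dom2(1) z(1) by (rule eventually_nhds_in_open)
          then show "eventually (\<lambda>w. F (T w) * h w = g w) (nhds z)"
            by eventually_elim (rule FT)
        qed
        have "(deriv ^^ k) g z + (\<Sum>j<k-1. B j z * (deriv ^^ j) g z) = 0" using sg z by (simp add: solves_ode_def)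
        then have "deriv T z ^ k * h z * ((deriv ^^ k) F (T z) + (\<Sum>j<k-1. a j (T z) * (deriv ^^ j) F (T z))) = 0"
          using ODE_id[OF Fhol z(1)] hd by simp
        then show "(deriv ^^ k) F w + (\<Sum>j<k-1. a j w * (deriv ^^ j) F w) = 0"
          using nzT[OF z(1)] nzh[OF z(1)] z(2) by simp
      qed
      then obtain c where c: "\<forall>w\<in>\<Omega>1. F w = (\<Sum>m=1..k. c m * f m w)" using fspan by blast
      show "\<exists>c. \<forall>z\<in>\<Omega>2. g z = (\<Sum>m=1..k. c m * (f m (T z) * h z))"
      proof (intro exI ballI)
        fix z assume z: "z \<in> \<Omega>2"
        have "g z = F (T z) * h z" using FT[OF z] by simp
        also have "\<dots> = (\<Sum>m=1..k. c m * f m (T z)) * h z" using c TS z by auto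
        also have "\<dots> = (\<Sum>m=1..k. c m * (f m (T z) * h z))" by (simp add: sum_distrib_right mult.assoc)
        finally show "g z = (\<Sum>m=1..k. c m * (f m (T z) * h z))" .
      qed
    qed
  qed
  show ?thesis
  proof (intro exI[of _ B] conjI)
    show "\<forall>j\<le>k-2. B j holomorphic_on \<Omega>2" using Bhol by blast
    show "solution_base \<Omega>2 k B (\<lambda>m z. f m (T z) * h z)" by (rule part2)
    show "\<forall>l\<in>{1..k-2}. \<forall>z\<in>\<Omega>2.
        a l (T z) * deriv T z ^ (k - l) =
          (\<Sum>j=l..k-1. (if j = k - 1 then 0 else B j z) *
             (\<Sum>i=l..j. of_nat (j choose i)
                * (inc_bell i l (\<lambda>m. (deriv ^^ m) T z) / deriv T z ^ l)
                * ((deriv ^^ (j - i)) h z / h z)))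
        + (\<Sum>i=l..k-1. of_nat (k choose i)
                * (inc_bell i l (\<lambda>m. (deriv ^^ m) T z) / deriv T z ^ l)
                * ((deriv ^^ (k - i)) h z / h z))
        + inc_bell k l (\<lambda>m. (deriv ^^ m) T z) / deriv T z ^ l"
    proof (intro ballI)
      fix l z assume l: "l \<in> {1..k-2}" and z: "z \<in> \<Omega>2"
      let ?X = "\<lambda>m. (deriv ^^ m) T z"
      let ?P = "deriv T z ^ l * h z"
      let ?G = "\<lambda>j i. of_nat (j choose i) * (inc_bell i l ?X / deriv T z ^ l) * ((deriv ^^ (j - i)) h z / h z)"
      have Pnz: "?P \<noteq> 0" using nzT[OF z] nzh[OF z] by simp
      have inner: "(\<Sum>i=l..j. ?G j i) = Cc T h j l z / ?P" for j
      proof -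
        have "Cc T h j l z = (\<Sum>i\<in>{l..j}. of_nat (j choose i) * bellB i l ?X * (deriv ^^ (j - i)) h z)"
          unfolding Cc_def by (rule sum.mono_neutral_right) (auto simp: bellB_vanish)
        note ce = this
        have "(\<Sum>i=l..j. ?G j i) = (\<Sum>i=l..j. of_nat (j choose i) * bellB i l ?X * (deriv ^^ (j - i)) h z / ?P)"
        proof (intro sum.cong refl)
          fix i assume i: "i \<in> {l..j}"
          then have "inc_bell i l ?X = bellB i l ?X" using l by (intro inc_bell_eq) auto
          then show "?G j i = of_nat (j choose i) * bellB i l ?X * (deriv ^^ (j - i)) h z / ?P"
            by simp
        qed
        also have "\<dots> = Cc T h j l z / ?P" unfolding ce sum_divide_distrib ..
        finally show ?thesis .
      qed
      have lk: "l \<le> k'" using l k2 by auto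
      have s23: "(\<Sum>i=l..k-1. ?G k i) + inc_bell k l ?X / deriv T z ^ l = Cc T h k l z / ?P"
      proof -
        have e1: "(\<Sum>i=l..k. ?G k i) = (\<Sum>i=l..k-1. ?G k i) + ?G k k"
          unfolding kk k1 using lk by (simp add: sum.cl_ivl_Suc)
        have e2: "?G k k = inc_bell k l ?X / deriv T z ^ l" using nzh[OF z] by simp
        show ?thesis using inner[of k] unfolding e1 e2 .
      qed
      have s1: "(\<Sum>j=l..k-1. (if j = k - 1 then 0 else B j z) * (\<Sum>i=l..j. ?G j i))
          = (a l (T z) * deriv T z ^ k * h z - Cc T h k l z) / ?P"
      proof -
        have "(\<Sum>j=l..k-1. (if j = k - 1 then 0 else B j z) * (\<Sum>i=l..j. ?G j i))
            = (\<Sum>j=l..k-2. B j z * (Cc T h j l z / ?P))"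
          unfolding k1 k2 inner using lk by (simp add: sum.cl_ivl_Suc)
        also have "\<dots> = (\<Sum>j=l..k-2. B j z * Cc T h j l z) / ?P"
          by (simp add: sum_divide_distrib)
        also have "\<dots> = (a l (T z) * deriv T z ^ k * h z - Cc T h k l z) / ?P"
          using triB[OF z, of l] l by simp
        finally show ?thesis .
      qed
      have pw: "deriv T z ^ k = deriv T z ^ (k - l) * deriv T z ^ l"
      proof -
        have "k = (k - l) + l" using l by auto
        then show ?thesis by (metis power_add)
      qed
      show "a l (T z) * deriv T z ^ (k - l) =
          (\<Sum>j=l..k-1. (if j = k - 1 then 0 else B j z) * (\<Sum>i=l..j. ?G j i))
        + (\<Sum>i=l..k-1. ?G k i) + inc_bell k l ?X / deriv T z ^ l"
        unfolding add.assoc s23 s1 using Pnz nzT[OF z] nzh[OF z] pw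
        by (simp add: field_simps)
    qed
    show "\<forall>z\<in>\<Omega>2. a 0 (T z) * deriv T z ^ k =
        (deriv ^^ k) h z / h z + (\<Sum>j<k-1. B j z * ((deriv ^^ j) h z / h z))"
    proof
      fix z assume z: "z \<in> \<Omega>2"
      have "(\<Sum>j<k-1. B j z * (deriv ^^ j) h z) = (\<Sum>j\<in>{0..k-2}. B j z * Cc T h j 0 z)"
        unfolding Cc_0 using kk by (intro sum.cong) auto
      also have "\<dots> = a 0 (T z) * deriv T z ^ k * h z - (deriv ^^ k) h z"
        using triB[OF z, of 0] by (simp add: Cc_0)
      finally have e: "(\<Sum>j<k-1. B j z * (deriv ^^ j) h z) = a 0 (T z) * deriv T z ^ k * h z - (deriv ^^ k) h z" .
      have "(deriv ^^ k) h z / h z + (\<Sum>j<k-1. B j z * ((deriv ^^ j) h z / h z))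
          = ((deriv ^^ k) h z + (\<Sum>j<k-1. B j z * (deriv ^^ j) h z)) / h z"
        by (simp add: sum_divide_distrib add_divide_distrib)
      also have "\<dots> = a 0 (T z) * deriv T z ^ k"
        unfolding e using nzh[OF z] by simp
      finally show "a 0 (T z) * deriv T z ^ k =
        (deriv ^^ k) h z / h z + (\<Sum>j<k-1. B j z * ((deriv ^^ j) h z / h z))" by simp
    qed
  qed
qed

end
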